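(* For $I=(z_1^3-z_3z_2,\,z_2^2)\subset\mathcal{O}_3$ one has $\mathbf{T}_2(I)=3$ and $D_2(I)\geq 4$. More precisely, let $V=\{z_1^3-z_3z_2=0\}\subset\mathbb{C}^3$; for every plane $S_{a,b}=\{z_3+az_1+bz_2=0\}$ with $a\neq0$, $b\neq0$, the germ $V\cap S_{a,b}$ at $0$ has an irreducible 1-dimensional component with minimal parametrization $\gamma_{a,b}$ such that $\frac{v(g\circ\gamma_{a,b})}{v(\gamma_{a,b})}\geq 4$ for all $g\in I$.
   Context: $\mathcal{O}_n$ denotes the local ring of germs at $0\in\mathbb{C}^n$ of holomorphic functions. $\Gamma$ denotes the set of non-constant germs of holomorphic maps $z\colon(\mathbb{C},0)\to(\mathbb{C}^n,0)$; $v(z)$ is the order of vanishing of $z$ at $0$ and $v(g\circ z)$ the order of vanishing of $g\circ z$ ($v(0)=\infty$). For an ideal $I\subset\mathcal{O}_n$, $\mathbf{T}_1(I)=\sup_{z\in\Gamma}\inf_{g\in I}\frac{v(g\circ z)}{v(z)}$, and $\mathbf{T}_q(I)=\inf_{\{w_1,\dots,w_{q-1}\}}\mathbf{T}_1(I,w_1,\dots,w_{q-1})$ over all linear functions $w_j$. Catlin $q$-type: let $G^{n-q+1}$ be the Grassmannian of $(n-q+1)$-dimensional linear subspaces of $\mathbb{C}^n$. For a germ $(V^q,0)$ of a $q$-dimensional complex analytic variety, for $S$ in a non-empty Zariski open subset of $G^{n-q+1}$ the germ $V^q\cap S$ at $0$ consists of finitely many irreducible 1-dimensional components with minimal parametrizations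 $\gamma_S^k$, $k=1,\dots,P$; for each $g\in\mathcal{O}_n$ the quantity $\max_{k}\frac{v(g\circ\gamma_S^k)}{v(\gamma_S^k)}$ takes one common value (its generic value) for all $S$ in a non-empty Zariski open subset of $G^{n-q+1}$. Then $D_q(I)=\sup_{V^q}\inf_{g\in I}\big(\text{generic value over }S\text{ of }\max_{k}\frac{v(g\circ\gamma_S^k)}{v(\gamma_S^k)}\big)$. *)

theory Defs
  imports "HOL-Analysis.Analysis"
begin

definition holo_n :: "(complex^'n::finite) set \<Rightarrow> (complex^'n \<Rightarrow> complex) \<Rightarrow> bool" where
  "holo_n U f \<longleftrightarrow>
     (\<forall>x\<in>U. \<exists>L. (f has_derivative L) (at x) \<and> (\<forall>c v. L (c *s v) = c * L v))"

text \<open>Germs at 0 of holomorphic functions (elements of O_n), represented by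
  functions holomorphic on some ball around 0 (values elsewhere irrelevant).\<close>
definition germ_holo :: "(complex^'n::finite \<Rightarrow> complex) \<Rightarrow> bool" where
  "germ_holo f \<longleftrightarrow> (\<exists>e>0. holo_n (ball 0 e) f)"

definition ideal_gen :: "(complex^'n::finite \<Rightarrow> complex) list \<Rightarrow> (complex^'n \<Rightarrow> complex) set" where
  "ideal_gen F = {g. \<exists>e>0. holo_n (ball 0 e) g \<and>
      (\<exists>hs. length hs = length F \<and> (\<forall>h\<in>set hs. holo_n (ball 0 e) h) \<and>
            (\<forall>x\<in>ball 0 e. g x = (\<Sum>i<length F. (hs!i) x * (F!i) x)))}"

definition ord0 :: "(complex \<Rightarrow> complex) \<Rightarrow> enat" where
  "ord0 h = (if \<forall>k. (deriv ^^ k) h 0 = 0 then \<infinity>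
             else enat (LEAST k. (deriv ^^ k) h 0 \<noteq> 0))"

definition curves :: "(complex \<Rightarrow> complex^'n::finite) set" where
  "curves = {z. (\<exists>e>0. \<forall>i. (\<lambda>t. z t $ i) holomorphic_on ball 0 e) \<and> z 0 = 0 \<and>
                \<not> (\<exists>d>0. \<forall>t\<in>ball 0 d. z t = 0)}"

definition cord :: "(complex \<Rightarrow> complex^'n::finite) \<Rightarrow> enat" where
  "cord z = Min (range (\<lambda>i. ord0 (\<lambda>t. z t $ i)))"

definition vratio :: "(complex^'n::finite \<Rightarrow> complex) \<Rightarrow> (complex \<Rightarrow> complex^'n) \<Rightarrow> ereal" where
  "vratio g z = (case ord0 (g \<circ> z) of
                   \<infinity> \<Rightarrow> \<infinity>
                 | enat m \<Rightarrow> (case cord z of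
                                 \<infinity> \<Rightarrow> 0
                               | enat k \<Rightarrow> ereal (real m / real k)))"

definition T1 :: "(complex^'n::finite \<Rightarrow> complex) set \<Rightarrow> ereal" where
  "T1 I = (SUP z\<in>curves. INF g\<in>I. vratio g z)"

definition linear_fun :: "(complex^'n::finite \<Rightarrow> complex) \<Rightarrow> bool" where
  "linear_fun w \<longleftrightarrow> (\<exists>c::complex^'n. \<forall>x. w x = (\<Sum>i\<in>UNIV. c $ i * x $ i))"

definition Tq :: "nat \<Rightarrow> (complex^'n::finite \<Rightarrow> complex) list \<Rightarrow> ereal" where
  "Tq q F = (INF W\<in>{W. length W = q - 1 \<and> (\<forall>w\<in>set W. linear_fun w)}. T1 (ideal_gen (F @ W)))"

text \<open>gamma is a minimal parametrization of an irreducible 1-dimensional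
  component of the germ at 0 of the (one-dimensional) set X: a non-constant
  curve germ whose image near 0 lies in X and which is injective near 0.\<close>
definition comp_param :: "(complex^'n::finite) set \<Rightarrow> (complex \<Rightarrow> complex^'n) \<Rightarrow> bool" where
  "comp_param X \<gamma> \<longleftrightarrow> \<gamma> \<in> curves \<and>
      (\<exists>d>0. (\<forall>t\<in>ball 0 d. \<gamma> t \<in> X) \<and> inj_on \<gamma> (ball 0 d))"

end

theory Submission imports Defs "HOL-Complex_Analysis.Conformal_Mappings" "HOL-Complex_Analysis.Complex_Singularities" begin


lemma factor_deriv:
  fixes q f :: "complex \<Rightarrow> complex"
  assumes r: "r > 0" and q: "q holomorphic_on ball 0 r"
    and f: "\<And>t. t \<in> ball 0 r \<Longrightarrow> f t = t ^ n * q t"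
  shows "j < n \<Longrightarrow> (deriv ^^ j) f 0 = 0"
    and "(deriv ^^ n) f 0 = fact n * q 0"
proof -
  have ev: "eventually (\<lambda>x. f x = (\<lambda>w. w ^ n * q w) x) (nhds 0)"
    unfolding eventually_nhds using f r by (intro exI[of _ "ball 0 r"]) auto
  have eq: "(deriv ^^ j) f 0 = (deriv ^^ j) (\<lambda>w. w ^ n * q w) 0" for j
    by (rule higher_deriv_cong_ev[OF ev refl])
  have hp: "(\<lambda>w::complex. w ^ n) holomorphic_on ball 0 r" by (intro holomorphic_intros)
  have pw: "(deriv ^^ i) (\<lambda>w::complex. w ^ n) 0 = pochhammer (of_nat (Suc n - i)) i * 0 ^ (n - i)" for i
    using higher_deriv_power[of i 0 n 0] by simp
  have m: "(deriv ^^ j) (\<lambda>w. w ^ n * q w) 0 =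
      (\<Sum>i = 0..j. of_nat (j choose i) * (deriv ^^ i) (\<lambda>w. w ^ n) 0 * (deriv ^^ (j-i)) q 0)" for j
    by (rule higher_deriv_mult[OF hp q]) (use r in auto)
  have z: "(deriv ^^ i) (\<lambda>w::complex. w ^ n) 0 = 0" if "i \<noteq> n" for i
  proof (cases "i < n")
    case True then show ?thesis by (simp add: pw)
  next
    case False
    then have "Suc n - i = 0" "i > 0" using that by auto
    then show ?thesis by (simp add: pw pochhammer_0_left)
  qed
  show "j < n \<Longrightarrow> (deriv ^^ j) f 0 = 0"
    by (simp add: eq m z)
  have "(deriv ^^ n) f 0 = (\<Sum>i = 0..n. of_nat (n choose i) * (deriv ^^ i) (\<lambda>w. w ^ n) 0 * (deriv ^^ (n-i)) q 0)"
    by (simp add: eq m)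
  also have "\<dots> = (\<Sum>i\<in>{n}. of_nat (n choose i) * (deriv ^^ i) (\<lambda>w. w ^ n) 0 * (deriv ^^ (n-i)) q 0)"
    by (rule sum.mono_neutral_right) (auto simp: z)
  also have "\<dots> = fact n * q 0"
    by (simp add: pw pochhammer_fact)
  finally show "(deriv ^^ n) f 0 = fact n * q 0" .
qed

lemma ord0_ge:
  fixes q f :: "complex \<Rightarrow> complex"
  assumes "r > 0" "q holomorphic_on ball 0 r"
    and "\<And>t. t \<in> ball 0 r \<Longrightarrow> f t = t ^ n * q t"
  shows "ord0 f \<ge> enat n"
proof (cases "\<forall>k. (deriv ^^ k) f 0 = 0")
  case True then show ?thesis by (simp add: ord0_def)
next
  case False
  then have ex: "\<exists>k. (deriv ^^ k) f 0 \<noteq> 0" by auto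
  have "\<not> (LEAST k. (deriv ^^ k) f 0 \<noteq> 0) < n"
    using factor_deriv(1)[OF assms] LeastI_ex[OF ex] by blast
  then show ?thesis using False by (simp add: ord0_def)
qed

lemma ord0_eq:
  fixes q f :: "complex \<Rightarrow> complex"
  assumes "r > 0" "q holomorphic_on ball 0 r"
    and "\<And>t. t \<in> ball 0 r \<Longrightarrow> f t = t ^ n * q t" and "q 0 \<noteq> 0"
  shows "ord0 f = enat n"
proof -
  have nz: "(deriv ^^ n) f 0 \<noteq> 0" using factor_deriv(2)[OF assms(1-3)] assms(4) by simp
  have "(LEAST k. (deriv ^^ k) f 0 \<noteq> 0) = n"
    by (rule Least_equality) (use nz factor_deriv(1)[OF assms(1-3)] in \<open>auto simp: not_less[symmetric]\<close>)
  then show ?thesis using nz by (auto simp: ord0_def)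
qed

lemma ord0_zero:
  fixes f :: "complex \<Rightarrow> complex"
  assumes "r > 0" "\<And>t. t \<in> ball 0 r \<Longrightarrow> f t = 0"
  shows "ord0 f = \<infinity>"
proof -
  have "(deriv ^^ k) f 0 = 0" for k
    using factor_deriv(1)[of r "\<lambda>_. 0" f "Suc k" k] assms by auto
  then show ?thesis by (simp add: ord0_def)
qed

lemma ord0_factor:
  fixes f :: "complex \<Rightarrow> complex"
  assumes r: "r > 0" and hf: "f holomorphic_on ball 0 r" and f0: "f 0 = 0" and o: "ord0 f = enat n"
  obtains q r' where "r' > 0" "q holomorphic_on ball 0 r'" "\<And>t. t \<in> ball 0 r' \<Longrightarrow> f t = t ^ n * q t" "q 0 \<noteq> 0"
proof -
  have ex: "\<exists>k. (deriv ^^ k) f 0 \<noteq> 0" and n: "n = (LEAST k. (deriv ^^ k) f 0 \<noteq> 0)"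
    using o by (auto simp: ord0_def split: if_splits)
  have nz: "(deriv ^^ n) f 0 \<noteq> 0" using LeastI_ex[OF ex] n by simp
  have below: "\<And>i. i < n \<Longrightarrow> (deriv ^^ i) f 0 = 0" using n not_less_Least by blast
  have "n \<noteq> 0" using nz f0 by (cases n) auto
  obtain g r1 where "0 < r1" "g holomorphic_on ball 0 r1"
      "\<And>w. w \<in> ball 0 r1 \<Longrightarrow> f w - f 0 = (w - 0)^n * g w"
      "\<And>w. w \<in> ball 0 r1 \<Longrightarrow> g w \<noteq> 0"
    by (rule holomorphic_factor_order_of_zero[OF hf open_ball _ _ nz]) (use r \<open>n \<noteq> 0\<close> below in auto)
  then show ?thesis using that[of r1 g] f0 by auto
qed

lemma ord0_inf_zero:
  fixes f :: "complex \<Rightarrow> complex"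
  assumes "f holomorphic_on ball 0 r" "ord0 f = \<infinity>" "t \<in> ball 0 r"
  shows "f t = 0"
  using assms holomorphic_fun_eq_0_on_ball[of f 0 r t] by (auto simp: ord0_def split: if_splits)



lemma holo_n_proj: "holo_n U (\<lambda>z::complex^'n::finite. z $ i)"
  unfolding holo_n_def
  by (auto intro!: exI[of _ "\<lambda>v. v $ i"] bounded_linear.has_derivative[OF bounded_linear_vec_nth] has_derivative_ident)

lemma holo_n_const: "holo_n U (\<lambda>z::complex^'n::finite. c)"
  unfolding holo_n_def by (auto intro!: exI[of _ "\<lambda>v. 0"])

lemma holo_n_add:
  assumes "holo_n U f" "holo_n U g" shows "holo_n U (\<lambda>z. f z + g z)"
  unfolding holo_n_def
proof
  fix x assume x: "x \<in> U"
  obtain L1 where L1: "(f has_derivative L1) (at x)" "\<forall>c v. L1 (c *s v) = c * L1 v"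
    using assms(1) x unfolding holo_n_def by blast
  obtain L2 where L2: "(g has_derivative L2) (at x)" "\<forall>c v. L2 (c *s v) = c * L2 v"
    using assms(2) x unfolding holo_n_def by blast
  show "\<exists>L. ((\<lambda>z. f z + g z) has_derivative L) (at x) \<and> (\<forall>c v. L (c *s v) = c * L v)"
    by (rule exI[of _ "\<lambda>v. L1 v + L2 v"]) (use L1 L2 in \<open>auto intro: has_derivative_add simp: algebra_simps\<close>)
qed

lemma holo_n_mult:
  assumes "holo_n U f" "holo_n U g" shows "holo_n U (\<lambda>z. f z * g z)"
  unfolding holo_n_def
proof
  fix x assume x: "x \<in> U"
  obtain L1 where L1: "(f has_derivative L1) (at x)" "\<forall>c v. L1 (c *s v) = c * L1 v"
    using assms(1) x unfolding holo_n_def by blast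
  obtain L2 where L2: "(g has_derivative L2) (at x)" "\<forall>c v. L2 (c *s v) = c * L2 v"
    using assms(2) x unfolding holo_n_def by blast
  show "\<exists>L. ((\<lambda>z. f z * g z) has_derivative L) (at x) \<and> (\<forall>c v. L (c *s v) = c * L v)"
    apply (rule exI[of _ "\<lambda>v. f x * L2 v + L1 v * g x"])
    apply (intro conjI has_derivative_mult L1(1) L2(1))
    using L1 L2 by (simp add: algebra_simps)
qed

lemma holo_n_neg:
  assumes "holo_n U f" shows "holo_n U (\<lambda>z. - f z)"
  using holo_n_mult[OF holo_n_const[of U "-1"] assms] by simp

lemma holo_n_diff:
  assumes "holo_n U f" "holo_n U g" shows "holo_n U (\<lambda>z. f z - g z)"
  using holo_n_add[OF assms(1) holo_n_neg[OF assms(2)]] by simp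

lemma holo_n_power:
  assumes "holo_n U f" shows "holo_n U (\<lambda>z. f z ^ n)"
  by (induction n) (auto intro: holo_n_const holo_n_mult assms)

lemma holo_n_subset: "holo_n U f \<Longrightarrow> V \<subseteq> U \<Longrightarrow> holo_n V f"
  unfolding holo_n_def by blast

lemma vec_has_derivative:
  fixes \<gamma> :: "complex \<Rightarrow> complex^'n::finite"
  assumes "\<And>i. ((\<lambda>t. \<gamma> t $ i) has_field_derivative d i) (at t)"
  shows "(\<gamma> has_derivative (\<lambda>s. \<chi> i. s * d i)) (at t)"
proof -
  have lin: "linear (\<lambda>s::complex. \<chi> i. s * d i)"
    by (rule linearI) (auto simp: vec_eq_iff algebra_simps)
  have bl: "bounded_linear (\<lambda>s::complex. \<chi> i. s * d i)"
    using lin linear_conv_bounded_linear by blast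
  have "((\<lambda>y. ((\<gamma> y - \<gamma> t) - (\<chi> i. (y - t) * d i)) /\<^sub>R norm (y - t)) \<longlongrightarrow> 0) (at t)"
  proof (rule vec_tendstoI)
    fix i
    have "((\<lambda>t. \<gamma> t $ i) has_derivative (\<lambda>s. d i * s)) (at t)"
      using assms[of i] by (simp add: has_field_derivative_def)
    then have "((\<lambda>y. ((\<gamma> y $ i - \<gamma> t $ i) - d i * (y - t)) /\<^sub>R norm (y - t)) \<longlongrightarrow> 0) (at t)"
      by (simp add: has_derivative_def)
    then show "((\<lambda>y. (((\<gamma> y - \<gamma> t) - (\<chi> i. (y - t) * d i)) /\<^sub>R norm (y - t)) $ i) \<longlongrightarrow> 0 $ i) (at t)"
      by (simp add: mult.commute)
  qed
  then show ?thesis using bl by (simp add: has_derivative_def)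
qed

lemma curve_deriv:
  fixes \<gamma> :: "complex \<Rightarrow> complex^'n::finite"
  assumes "\<And>i. (\<lambda>t. \<gamma> t $ i) holomorphic_on S" "open S" "t \<in> S"
  shows "(\<gamma> has_derivative (\<lambda>s. \<chi> i. s * deriv (\<lambda>t. \<gamma> t $ i) t)) (at t)"
  apply (rule vec_has_derivative)
  using assms holomorphic_derivI by blast

lemma holo_comp:
  fixes \<gamma> :: "complex \<Rightarrow> complex^'n::finite"
  assumes h: "holo_n U h" and g: "\<And>i. (\<lambda>t. \<gamma> t $ i) holomorphic_on S" and S: "open S"
    and sub: "\<And>t. t \<in> S \<Longrightarrow> \<gamma> t \<in> U"
  shows "(\<lambda>t. h (\<gamma> t)) holomorphic_on S"
  unfolding holomorphic_on_open[OF S]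
proof
  fix t assume t: "t \<in> S"
  define d where "d i = deriv (\<lambda>t. \<gamma> t $ i) t" for i
  have gd: "(\<gamma> has_derivative (\<lambda>s. \<chi> i. s * d i)) (at t)"
    unfolding d_def by (rule curve_deriv[OF g S t])
  obtain L where L: "(h has_derivative L) (at (\<gamma> t))" "\<forall>c v. L (c *s v) = c * L v"
    using h sub[OF t] unfolding holo_n_def by blast
  have "((\<lambda>t. h (\<gamma> t)) has_derivative (\<lambda>s. L (\<chi> i. s * d i))) (at t)"
    using has_derivative_compose[OF gd L(1)] by (simp add: o_def)
  moreover have "(\<lambda>s. L (\<chi> i. s * d i)) = (\<lambda>s. L (\<chi> i. d i) * s)"
  proof
    fix s
    have "(\<chi> i. s * d i) = s *s (\<chi> i. d i)" by (simp add: vec_eq_iff)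
    then show "L (\<chi> i. s * d i) = L (\<chi> i. d i) * s" using L(2) by (simp add: mult.commute)
  qed
  ultimately show "\<exists>f'. ((\<lambda>t. h (\<gamma> t)) has_field_derivative f') (at t)"
    by (auto simp: has_field_derivative_def)
qed

lemma curve_small:
  fixes \<gamma> :: "complex \<Rightarrow> complex^'n::finite"
  assumes g: "\<And>i. (\<lambda>t. \<gamma> t $ i) holomorphic_on ball 0 e0" and e0: "e0 > 0" and z: "\<gamma> 0 = 0" and e: "e > 0"
  obtains d where "d > 0" "d \<le> e0" "\<And>t. t \<in> ball 0 d \<Longrightarrow> \<gamma> t \<in> ball 0 e"
proof -
  have "(\<gamma> has_derivative (\<lambda>s. \<chi> i. s * deriv (\<lambda>t. \<gamma> t $ i) 0)) (at 0)"
    by (rule curve_deriv[OF g]) (use e0 in auto)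
  then have "isCont \<gamma> 0" by (rule has_derivative_continuous)
  then obtain d where d: "d > 0" "\<And>x'. dist x' 0 < d \<Longrightarrow> dist (\<gamma> x') (\<gamma> 0) < e"
    unfolding continuous_at_eps_delta using e by blast
  show ?thesis
    by (rule that[of "min d e0"]) (use d e0 z in \<open>auto simp: dist_norm\<close>)
qed


lemma sum3: "(\<Sum>i<3. f i) = f 0 + f (Suc 0) + (f (Suc (Suc 0)) :: 'a::comm_monoid_add)"
  by (simp add: numeral_3_eq_3 add.commute add.left_commute)

lemma sum2: "(\<Sum>i<2. f i) = f 0 + (f (1::nat) :: 'a::comm_monoid_add)"
  by (simp add: numeral_2_eq_2 add.commute)

lemma ideal3_dest:
  assumes "g \<in> ideal_gen [F0, F1, F2]"
  obtains e h0 h1 h2 where "e > 0" "holo_n (ball 0 e) h0" "holo_n (ball 0 e) h1" "holo_n (ball 0 e) h2"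
    "\<And>x. x \<in> ball 0 e \<Longrightarrow> g x = h0 x * F0 x + h1 x * F1 x + h2 x * F2 x"
proof -
  obtain e hs where e: "e > 0" "length hs = length [F0,F1,F2]" "\<forall>h\<in>set hs. holo_n (ball 0 e) h"
    "\<forall>x\<in>ball 0 e. g x = (\<Sum>i<length [F0,F1,F2]. (hs!i) x * ([F0,F1,F2]!i) x)"
    using assms unfolding ideal_gen_def by blast
  have "hs ! 0 \<in> set hs" "hs ! Suc 0 \<in> set hs" "hs ! Suc (Suc 0) \<in> set hs" using e(2) by simp_all
  then show ?thesis using e by (intro that[of e "hs!0" "hs!Suc 0" "hs!Suc (Suc 0)"]) (auto simp: sum3)
qed

lemma ideal2_dest:
  assumes "g \<in> ideal_gen [F0, F1]"
  obtains e h0 h1 where "e > 0" "holo_n (ball 0 e) h0" "holo_n (ball 0 e) h1"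
    "\<And>x. x \<in> ball 0 e \<Longrightarrow> g x = h0 x * F0 x + h1 x * F1 x"
proof -
  obtain e hs where e: "e > 0" "length hs = length [F0,F1]" "\<forall>h\<in>set hs. holo_n (ball 0 e) h"
    "\<forall>x\<in>ball 0 e. g x = (\<Sum>i<length [F0,F1]. (hs!i) x * ([F0,F1]!i) x)"
    using assms unfolding ideal_gen_def by blast
  have "hs ! 0 \<in> set hs" "hs ! 1 \<in> set hs" using e(2) by simp_all
  then show ?thesis using e by (intro that[of e "hs!0" "hs!1"]) (auto simp: sum2)
qed

lemma ideal3_intro:
  assumes "e > 0" "holo_n (ball 0 e) g" "holo_n (ball 0 e) h0" "holo_n (ball 0 e) h1" "holo_n (ball 0 e) h2"
    "\<And>x. x \<in> ball 0 e \<Longrightarrow> g x = h0 x * F0 x + h1 x * F1 x + h2 x * F2 x"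
  shows "g \<in> ideal_gen [F0, F1, F2]"
  unfolding ideal_gen_def
  using assms by (intro CollectI exI[of _ e] conjI exI[of _ "[h0,h1,h2]"]) (auto simp: sum3)

lemma cord_eq:
  assumes "\<And>i. ord0 (\<lambda>t. z t $ i) \<ge> enat k" "ord0 (\<lambda>t. z t $ j) = enat k"
  shows "cord z = enat k"
  unfolding cord_def using assms by (intro Min_eqI) (auto intro: sym)

lemma vratio_ge:
  assumes "cord z = enat k" "k > 0" "ord0 (g \<circ> z) \<ge> enat m"
  shows "vratio g z \<ge> ereal (real m / real k)"
proof (cases "ord0 (g \<circ> z)")
  case (enat m')
  then have "m \<le> m'" using assms(3) by auto
  then have "real m / real k \<le> real m' / real k" by (simp add: divide_right_mono)
  then show ?thesis using enat assms(1) by (simp add: vratio_def)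
next
  case infinity then show ?thesis by (simp add: vratio_def)
qed


definition gab :: "complex \<Rightarrow> complex \<Rightarrow> complex \<Rightarrow> complex^3" where
  "gab a b m = vector [- m * (a + b * m), - (m^2) * (a + b * m), m * (a + b * m)^2]"

lemma gab_simps [simp]:
  "gab a b m $ 1 = - m * (a + b * m)"
  "gab a b m $ 2 = - (m^2) * (a + b * m)"
  "gab a b m $ 3 = m * (a + b * m)^2"
  by (simp_all add: gab_def)

lemma gab_holo: "(\<lambda>t. gab a b t $ i) holomorphic_on S"
  using exhaust_3[of i] by (auto intro!: holomorphic_intros)

lemma gab_0: "gab a b 0 = 0"
  by (simp add: vec_eq_iff gab_def forall_3)

lemma small_nonzero:
  fixes a b :: complex
  assumes "a \<noteq> 0" "d > 0"
  obtains t where "t \<in> ball 0 d" "t \<noteq> 0" "a + b * t \<noteq> 0"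
proof -
  define r where "r = min (d/2) (cmod a / (2 * (cmod b + 1)))"
  have pb: "2 * (cmod b + 1) > 0" by (smt (verit) norm_ge_zero)
  have r0: "r > 0" using assms pb unfolding r_def by simp
  have "cmod a / (2 * (cmod b + 1)) * cmod b < cmod a"
  proof -
    have "cmod a / (2 * (cmod b + 1)) * cmod b = cmod a * (cmod b / (2 * (cmod b + 1)))" by simp
    also have "\<dots> < cmod a * 1"
      using assms pb by (intro mult_strict_left_mono) (auto simp: divide_less_eq)
    finally show ?thesis by simp
  qed
  then have "r * cmod b < cmod a"
    by (smt (verit, best) min.cobounded2 mult_right_mono norm_ge_zero r_def)
  then have "cmod (b * complex_of_real r) < cmod a" using r0 by (simp add: norm_mult mult.commute)
  then have "a + b * complex_of_real r \<noteq> 0"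
    by (metis add.inverse_unique norm_minus_cancel order_less_irrefl)
  moreover have "complex_of_real r \<in> ball 0 d" using r0 assms by (simp add: r_def)
  ultimately show ?thesis using that[of "complex_of_real r"] r0 by auto
qed

lemma gab_curve: "a \<noteq> 0 \<Longrightarrow> gab a b \<in> curves"
  unfolding curves_def
proof (intro CollectI conjI)
  show "\<exists>e>0. \<forall>i. (\<lambda>t. gab a b t $ i) holomorphic_on ball 0 e"
    by (intro exI[of _ 1]) (simp add: gab_holo)
  show "gab a b 0 = 0" by (rule gab_0)
  assume a: "a \<noteq> 0"
  show "\<not> (\<exists>d>0. \<forall>t\<in>ball 0 d. gab a b t = 0)"
  proof
    assume "\<exists>d>0. \<forall>t\<in>ball 0 d. gab a b t = 0"
    then obtain d where d: "d > 0" "\<forall>t\<in>ball 0 d. gab a b t = 0" by blast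
    obtain t where t: "t \<in> ball 0 d" "t \<noteq> 0" "a + b * t \<noteq> 0" using small_nonzero[OF a d(1)] by blast
    have "gab a b t $ 1 = 0" using d t by simp
    then show False using t by simp
  qed
qed

lemma gab_cord: "a \<noteq> 0 \<Longrightarrow> cord (gab a b) = enat 1"
proof (rule cord_eq)
  assume a: "a \<noteq> 0"
  show "ord0 (\<lambda>t. gab a b t $ 1) = enat 1"
    by (rule ord0_eq[of 1 "\<lambda>t. - (a + b * t)"]) (use a in \<open>auto intro!: holomorphic_intros simp: algebra_simps\<close>)
  fix i :: 3
  have "ord0 (\<lambda>t. gab a b t $ 1) \<ge> enat 1"
    by (rule ord0_ge[of 1 "\<lambda>t. - (a + b * t)"]) (auto intro!: holomorphic_intros simp: algebra_simps)
  moreover have "ord0 (\<lambda>t. gab a b t $ 2) \<ge> enat 1"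
    by (rule ord0_ge[of 1 "\<lambda>t. - t * (a + b * t)"]) (auto intro!: holomorphic_intros simp: power2_eq_square)
  moreover have "ord0 (\<lambda>t. gab a b t $ 3) \<ge> enat 1"
    by (rule ord0_ge[of 1 "\<lambda>t. (a + b * t)^2"]) (auto intro!: holomorphic_intros)
  ultimately show "ord0 (\<lambda>t. gab a b t $ i) \<ge> enat 1" using exhaust_3[of i] by auto
qed

lemma gab_vratio:
  assumes a: "a \<noteq> 0" and e: "e > 0" and h: "holo_n (ball 0 e) h"
    and g: "\<And>t. gab a b t \<in> ball 0 e \<Longrightarrow> g (gab a b t) = h (gab a b t) * (gab a b t $ 2)^2"
  shows "vratio g (gab a b) \<ge> 4"
proof -
  obtain d where d: "d > 0" "d \<le> 1" "\<And>t. t \<in> ball 0 d \<Longrightarrow> gab a b t \<in> ball 0 e"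
    using curve_small[of "gab a b" 1 e] gab_holo gab_0 e by auto
  have q: "(\<lambda>t. h (gab a b t) * (a + b * t)^2) holomorphic_on ball 0 d"
    by (intro holomorphic_intros holo_comp[OF h] gab_holo) (use d in auto)
  have "ord0 (g \<circ> gab a b) \<ge> enat 4"
  proof (rule ord0_ge[OF d(1) q])
    fix t :: complex assume "t \<in> ball 0 d"
    then show "(g \<circ> gab a b) t = t ^ 4 * (h (gab a b t) * (a + b * t)^2)"
      using g d(3) by (simp add: algebra_simps power2_eq_square power4_eq_xxxx)
  qed
  from vratio_ge[OF gab_cord[OF a] _ this] show ?thesis by simp
qed

lemma gab_inj:
  assumes "a \<noteq> 0" "b \<noteq> 0"
  shows "inj_on (gab a b) (ball 0 (cmod a / (2 * cmod b)))"
proof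
  fix s t assume s: "s \<in> ball 0 (cmod a / (2 * cmod b))" and t: "t \<in> ball 0 (cmod a / (2 * cmod b))"
    and eq: "gab a b s = gab a b t"
  have "gab a b s $ 1 = gab a b t $ 1" using eq by simp
  then have "(s - t) * (a + b * (s + t)) = 0" by (simp add: algebra_simps power2_eq_square)
  moreover have "a + b * (s + t) \<noteq> 0"
  proof
    assume "a + b * (s + t) = 0"
    then have "cmod a = cmod b * cmod (s + t)" by (metis add_eq_0_iff norm_minus_cancel norm_mult)
    also have "\<dots> \<le> cmod b * (cmod s + cmod t)" by (simp add: mult_left_mono norm_triangle_ineq)
    also have "\<dots> < cmod b * (cmod a / (2 * cmod b) + cmod a / (2 * cmod b))"
      using s t assms by (intro mult_strict_left_mono add_strict_mono) auto
    also have "\<dots> = cmod a" using assms by (simp add: field_simps)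
    finally show False by simp
  qed
  ultimately show "s = t" by simp
qed


definition del :: "complex \<Rightarrow> complex \<Rightarrow> complex^3" where
  "del b t = vector [t^2, t^3, - b * t^3]"

lemma del_simps [simp]:
  "del b t $ 1 = t^2" "del b t $ 2 = t^3" "del b t $ 3 = - b * t^3"
  by (simp_all add: del_def)

lemma del_holo: "(\<lambda>t. del b t $ i) holomorphic_on S"
  using exhaust_3[of i] by (auto intro!: holomorphic_intros)

lemma del_0: "del b 0 = 0"
  by (simp add: vec_eq_iff del_def forall_3)

lemma del_curve: "del b \<in> curves"
  unfolding curves_def
proof (intro CollectI conjI)
  show "\<exists>e>0. \<forall>i. (\<lambda>t. del b t $ i) holomorphic_on ball 0 e"
    by (intro exI[of _ 1]) (simp add: del_holo)
  show "del b 0 = 0" by (rule del_0)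
  show "\<not> (\<exists>d>0. \<forall>t\<in>ball 0 d. del b t = 0)"
  proof
    assume "\<exists>d>0. \<forall>t\<in>ball 0 d. del b t = 0"
    then obtain d where d: "d > 0" "\<forall>t\<in>ball 0 d. del b t = 0" by blast
    have "complex_of_real (d/2) \<in> ball 0 d" using d by simp
    then have "del b (complex_of_real (d/2)) = 0" using d(2) by blast
    then have "del b (complex_of_real (d/2)) $ 1 = 0" by simp
    then show False using d(1) by simp
  qed
qed

lemma del_cord: "cord (del b) = enat 2"
proof (rule cord_eq)
  show "ord0 (\<lambda>t. del b t $ 1) = enat 2"
    by (rule ord0_eq[of 1 "\<lambda>t. 1"]) auto
  fix i :: 3
  have "ord0 (\<lambda>t. del b t $ 1) \<ge> enat 2"
    by (rule ord0_ge[of 1 "\<lambda>t. 1"]) auto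
  moreover have "ord0 (\<lambda>t. del b t $ 2) \<ge> enat 2"
    by (rule ord0_ge[of 1 "\<lambda>t. t"]) (auto intro!: holomorphic_intros simp: power2_eq_square power3_eq_cube)
  moreover have "ord0 (\<lambda>t. del b t $ 3) \<ge> enat 2"
    by (rule ord0_ge[of 1 "\<lambda>t. - b * t"]) (auto intro!: holomorphic_intros simp: power2_eq_square power3_eq_cube)
  ultimately show "ord0 (\<lambda>t. del b t $ i) \<ge> enat 2" using exhaust_3[of i] by auto
qed

lemma del_vratio:
  assumes e: "e > 0" and h: "holo_n (ball 0 e) h"
    and g: "\<And>t. del b t \<in> ball 0 e \<Longrightarrow> g (del b t) = (del b t $ 1)^3 * h (del b t)"
  shows "vratio g (del b) \<ge> 3"
proof -
  obtain d where d: "d > 0" "d \<le> 1" "\<And>t. t \<in> ball 0 d \<Longrightarrow> del b t \<in> ball 0 e"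
    using curve_small[of "del b" 1 e] del_holo del_0 e by auto
  have q: "(\<lambda>t. h (del b t)) holomorphic_on ball 0 d"
    by (intro holo_comp[OF h] del_holo) (use d in auto)
  have "ord0 (g \<circ> del b) \<ge> enat 6"
  proof (rule ord0_ge[OF d(1) q])
    fix t :: complex assume "t \<in> ball 0 d"
    then show "(g \<circ> del b) t = t ^ 6 * h (del b t)"
      using g d(3) by (simp flip: power_mult)
  qed
  from vratio_ge[OF del_cord _ this] show ?thesis by simp
qed

definition eps :: "complex \<Rightarrow> complex^3" where
  "eps t = vector [0, 0, t]"

lemma eps_simps [simp]:
  "eps t $ 1 = 0" "eps t $ 2 = 0" "eps t $ 3 = t"
  by (simp_all add: eps_def)

lemma eps_holo: "(\<lambda>t. eps t $ i) holomorphic_on S"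
  using exhaust_3[of i] by (auto intro!: holomorphic_intros)

lemma eps_0: "eps 0 = 0"
  by (simp add: vec_eq_iff eps_def forall_3)

lemma eps_curve: "eps \<in> curves"
  unfolding curves_def
proof (intro CollectI conjI)
  show "\<exists>e>0. \<forall>i. (\<lambda>t. eps t $ i) holomorphic_on ball 0 e"
    by (intro exI[of _ 1]) (simp add: eps_holo)
  show "eps 0 = 0" by (rule eps_0)
  show "\<not> (\<exists>d>0. \<forall>t\<in>ball 0 d. eps t = 0)"
  proof
    assume "\<exists>d>0. \<forall>t\<in>ball 0 d. eps t = 0"
    then obtain d where d: "d > 0" "\<forall>t\<in>ball 0 d. eps t = 0" by blast
    have "complex_of_real (d/2) \<in> ball 0 d" using d by simp
    then have "eps (complex_of_real (d/2)) = 0" using d(2) by blast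
    then have "eps (complex_of_real (d/2)) $ 3 = 0" by simp
    then show False using d(1) by simp
  qed
qed

lemma eps_vratio:
  assumes e: "e > 0" and g: "\<And>t. eps t \<in> ball 0 e \<Longrightarrow> g (eps t) = 0"
  shows "vratio g eps = \<infinity>"
proof -
  obtain d where d: "d > 0" "d \<le> 1" "\<And>t. t \<in> ball 0 d \<Longrightarrow> eps t \<in> ball 0 e"
    using curve_small[of eps 1 e] eps_holo eps_0 e by auto
  have "ord0 (g \<circ> eps) = \<infinity>"
    by (rule ord0_zero[OF d(1)]) (use g d(3) in auto)
  then show ?thesis by (simp add: vratio_def)
qed


lemma T1_lower:
  fixes f1 f2 w :: "complex^3 \<Rightarrow> complex"
  assumes f1: "\<And>z. f1 z = (z $ 1) ^ 3 - z $ 3 * z $ 2"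
      and f2: "\<And>z. f2 z = (z $ 2) ^ 2"
      and w: "linear_fun w"
  shows "T1 (ideal_gen [f1, f2, w]) \<ge> 3"
proof -
  obtain c :: "complex^3" where c: "\<And>x. w x = c$1 * x$1 + c$2 * x$2 + c$3 * x$3"
    using w unfolding linear_fun_def by (auto simp: sum_3)
  show ?thesis
  proof (cases "c$3 = 0")
    case True
    have "3 \<le> (INF g\<in>ideal_gen [f1, f2, w]. vratio g eps)"
    proof (rule INF_greatest)
      fix g assume "g \<in> ideal_gen [f1, f2, w]"
      then obtain e h0 h1 h2 where e: "e > 0" "holo_n (ball 0 e) h0" "holo_n (ball 0 e) h1" "holo_n (ball 0 e) h2"
        "\<And>x. x \<in> ball 0 e \<Longrightarrow> g x = h0 x * f1 x + h1 x * f2 x + h2 x * w x"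
        by (rule ideal3_dest[of g f1 f2 w]) (rule that; assumption)
      have "vratio g eps = \<infinity>"
        by (rule eps_vratio[OF e(1)]) (simp add: e(5) f1 f2 c True)
      then show "3 \<le> vratio g eps" by simp
    qed
    then show ?thesis unfolding T1_def by (rule SUP_upper2[OF eps_curve])
  next
    case False
    define a where "a = c$1 / c$3"
    define b where "b = c$2 / c$3"
    have c1: "c$1 = a * c$3" and c2: "c$2 = b * c$3" using False by (simp_all add: a_def b_def)
    show ?thesis
    proof (cases "a = 0")
      case False
      have "3 \<le> (INF g\<in>ideal_gen [f1, f2, w]. vratio g (gab a b))"
      proof (rule INF_greatest)
        fix g assume "g \<in> ideal_gen [f1, f2, w]"
        then obtain e h0 h1 h2 where e: "e > 0" "holo_n (ball 0 e) h1" "holo_n (ball 0 e) h0" "holo_n (ball 0 e) h2"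
          "\<And>x. x \<in> ball 0 e \<Longrightarrow> g x = h0 x * f1 x + h1 x * f2 x + h2 x * w x"
          by (rule ideal3_dest[of g f1 f2 w]) (rule that; assumption)
        have "vratio g (gab a b) \<ge> 4"
        proof (rule gab_vratio[OF False e(1) e(2)])
          fix t assume t: "gab a b t \<in> ball 0 e"
          have "f1 (gab a b t) = 0" by (simp add: f1 algebra_simps power2_eq_square power3_eq_cube)
          moreover have "w (gab a b t) = 0" by (simp add: c c1 c2 algebra_simps power2_eq_square)
          ultimately show "g (gab a b t) = h1 (gab a b t) * (gab a b t $ 2)^2"
            using e(5)[OF t] by (simp add: f2)
        qed
        then show "3 \<le> vratio g (gab a b)" by (rule order_trans[rotated]) simp
      qed
      then show ?thesis unfolding T1_def by (rule SUP_upper2[OF gab_curve[OF False]])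
    next
      case True
      have "3 \<le> (INF g\<in>ideal_gen [f1, f2, w]. vratio g (del b))"
      proof (rule INF_greatest)
        fix g assume "g \<in> ideal_gen [f1, f2, w]"
        then obtain e h0 h1 h2 where e: "e > 0" "holo_n (ball 0 e) h0" "holo_n (ball 0 e) h1" "holo_n (ball 0 e) h2"
          "\<And>x. x \<in> ball 0 e \<Longrightarrow> g x = h0 x * f1 x + h1 x * f2 x + h2 x * w x"
          by (rule ideal3_dest[of g f1 f2 w]) (rule that; assumption)
        show "vratio g (del b) \<ge> 3"
        proof (rule del_vratio[OF e(1)])
          show "holo_n (ball 0 e) (\<lambda>x. h0 x * (1 + b) + h1 x)"
            by (intro holo_n_add holo_n_mult holo_n_const e(2,3))
          fix t assume t: "del b t \<in> ball 0 e"
          have "f1 (del b t) = (del b t $ 1)^3 * (1 + b)"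
            by (simp add: f1 algebra_simps flip: power_mult power_add)
          moreover have "f2 (del b t) = (del b t $ 1)^3"
            by (simp add: f2 flip: power_mult)
          moreover have "w (del b t) = 0" by (simp add: c c1 c2 True)
          ultimately show "g (del b t) = (del b t $ 1)^3 * (h0 (del b t) * (1 + b) + h1 (del b t))"
            using e(5)[OF t] by (simp add: algebra_simps)
        qed
      qed
      then show ?thesis unfolding T1_def by (rule SUP_upper2[OF del_curve])
    qed
  qed
qed


lemma comp_pow:
  fixes z :: "complex \<Rightarrow> complex^'n::finite"
  assumes e: "e > 0" and hol: "(\<lambda>t. z t $ j) holomorphic_on ball 0 e" and z0: "z 0 $ j = 0"
    and o: "ord0 (\<lambda>t. z t $ j) = enat k"
  shows "ord0 (\<lambda>t. (z t $ j) ^ p) = enat (p * k)"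
proof -
  obtain q r where r: "r > 0" "q holomorphic_on ball 0 r" "\<And>t. t \<in> ball 0 r \<Longrightarrow> z t $ j = t ^ k * q t" "q 0 \<noteq> 0"
    using ord0_factor[OF e hol z0 o] by blast
  show ?thesis
  proof (rule ord0_eq[of r "\<lambda>t. q t ^ p"])
    show "(\<lambda>t. q t ^ p) holomorphic_on ball 0 r" using r(2) by (intro holomorphic_intros)
    fix t :: complex assume "t \<in> ball 0 r"
    then show "z t $ j ^ p = t ^ (p * k) * q t ^ p"
      using r(3) by (simp add: power_mult_distrib mult.commute flip: power_mult)
  qed (use r in auto)
qed

lemma vratio_le:
  assumes "cord z = enat k" "ord0 (g \<circ> z) = enat (p * k)" "p \<le> 3"
  shows "vratio g z \<le> 3"
proof (cases "k = 0")
  case True then show ?thesis using assms by (simp add: vratio_def)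
next
  case False
  then have "real (p * k) / real k = real p" by simp
  then show ?thesis using assms by (simp add: vratio_def)
qed

lemma T1_upper:
  fixes f1 f2 w3 :: "complex^3 \<Rightarrow> complex"
  assumes f1: "\<And>z. f1 z = (z $ 1) ^ 3 - z $ 3 * z $ 2"
      and f2: "\<And>z. f2 z = (z $ 2) ^ 2"
      and w3: "\<And>x. w3 x = x $ 3"
  shows "T1 (ideal_gen [f1, f2, w3]) \<le> 3"
  unfolding T1_def
proof (rule SUP_least)
  fix z :: "complex \<Rightarrow> complex^3" assume "z \<in> curves"
  then obtain e where e: "e > 0" and hol: "\<And>i. (\<lambda>t. z t $ i) holomorphic_on ball 0 e"
    and z0: "z 0 = 0" and nz: "\<not> (\<exists>d>0. \<forall>t\<in>ball 0 d. z t = 0)"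
    unfolding curves_def by blast
  define od where "od i = ord0 (\<lambda>t. z t $ i)" for i
  have "\<exists>i. od i \<noteq> \<infinity>"
  proof (rule ccontr)
    assume "\<not> (\<exists>i. od i \<noteq> \<infinity>)"
    then have "\<forall>t\<in>ball 0 e. z t = 0"
      using ord0_inf_zero[OF hol] by (auto simp: od_def vec_eq_iff)
    then show False using nz e by blast
  qed
  then obtain i0 k0 where i0: "od i0 = enat k0" by (meson enat.exhaust)
  have cmin: "cord z \<in> range od" unfolding cord_def od_def[abs_def] by (intro Min_in) auto
  have cle: "cord z \<le> od i0" unfolding cord_def od_def by (intro Min_le) auto
  obtain k where k: "cord z = enat k" using cle i0 by (cases "cord z") auto
  obtain j where j: "od j = enat k" using cmin k by auto
  have z0j: "z 0 $ j = 0" using z0 by simp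
  have pw: "ord0 (\<lambda>t. (z t $ j) ^ p) = enat (p * k)" for p
    using comp_pow[OF e hol z0j] j by (simp add: od_def)
  have "\<exists>g\<in>ideal_gen [f1, f2, w3]. vratio g z \<le> 3"
  proof -
    have h1: "holo_n (ball 0 1) (\<lambda>x::complex^3. 1)" "holo_n (ball 0 1) (\<lambda>x::complex^3. 0)"
      by (simp_all add: holo_n_const)
    consider "j = 1" | "j = 2" | "j = 3" using exhaust_3 by blast
    then show ?thesis
    proof cases
      case 1
      have mem: "(\<lambda>x. (x $ 1) ^ 3) \<in> ideal_gen [f1, f2, w3]"
        by (rule ideal3_intro[of 1 _ "\<lambda>x. 1" "\<lambda>x. 0" "\<lambda>x. x $ 2"])
           (auto simp: f1 w3 holo_n_const holo_n_proj holo_n_power)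
      have "(\<lambda>x. (x $ 1) ^ 3) \<circ> z = (\<lambda>t. (z t $ j) ^ 3)" using 1 by (simp add: o_def)
      then have "vratio (\<lambda>x. (x $ 1) ^ 3) z \<le> 3" using pw[of 3] k by (intro vratio_le) auto
      then show ?thesis using mem by blast
    next
      case 2
      have f2eq: "f2 = (\<lambda>z. (z $ 2) ^ 2)" by (rule ext) (simp add: f2)
      have mem: "f2 \<in> ideal_gen [f1, f2, w3]"
        by (rule ideal3_intro[of 1 _ "\<lambda>x. 0" "\<lambda>x. 1" "\<lambda>x. 0"])
           (auto simp: f2 f2eq holo_n_const holo_n_proj holo_n_power)
      have "f2 \<circ> z = (\<lambda>t. (z t $ j) ^ 2)" using 2 by (simp add: o_def f2)
      then have "vratio f2 z \<le> 3" using pw[of 2] k by (intro vratio_le) auto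
      then show ?thesis using mem by blast
    next
      case 3
      have w3eq: "w3 = (\<lambda>z. z $ 3)" by (rule ext) (simp add: w3)
      have mem: "w3 \<in> ideal_gen [f1, f2, w3]"
        by (rule ideal3_intro[of 1 _ "\<lambda>x. 0" "\<lambda>x. 0" "\<lambda>x. 1"])
           (auto simp: w3 w3eq holo_n_const holo_n_proj)
      have "w3 \<circ> z = (\<lambda>t. (z t $ j) ^ 1)" using 3 by (simp add: o_def w3)
      then have "vratio w3 z \<le> 3" using pw[of 1] k by (intro vratio_le) auto
      then show ?thesis using mem by blast
    qed
  qed
  then show "(INF g\<in>ideal_gen [f1, f2, w3]. vratio g z) \<le> 3"
    by (meson INF_lower2)
qed


theorem mainTheorem4:
  fixes f1 f2 :: "complex^3 \<Rightarrow> complex"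
  assumes "\<And>z. f1 z = (z $ 1) ^ 3 - z $ 3 * z $ 2"
      and "\<And>z. f2 z = (z $ 2) ^ 2"
  shows "Tq 2 [f1, f2] = 3 \<and>
    (\<forall>a b :: complex. a \<noteq> 0 \<longrightarrow> b \<noteq> 0 \<longrightarrow>
       (\<exists>\<gamma>. comp_param ({z. f1 z = 0} \<inter> {z. z $ 3 + a * z $ 1 + b * z $ 2 = 0}) \<gamma> \<and>
             (\<forall>g\<in>ideal_gen [f1, f2]. vratio g \<gamma> \<ge> 4)))"
proof (intro conjI allI impI)
  note f1 = assms(1) and f2 = assms(2)
  show "Tq 2 [f1, f2] = 3"
  proof (rule antisym)
    define w3 :: "complex^3 \<Rightarrow> complex" where
      "w3 x = (\<Sum>i\<in>UNIV. (vector [0,0,1] :: complex^3) $ i * x $ i)" for x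
    have lw: "linear_fun w3" unfolding linear_fun_def w3_def by blast
    have w3: "w3 x = x $ 3" for x by (simp add: w3_def sum_3)
    have "T1 (ideal_gen ([f1, f2] @ [w3])) \<le> 3" using T1_upper[OF f1 f2 w3] by simp
    then show "Tq 2 [f1, f2] \<le> 3"
      unfolding Tq_def by (rule INF_lower2[rotated]) (use lw in simp)
  next
    show "3 \<le> Tq 2 [f1, f2]"
      unfolding Tq_def
    proof (rule INF_greatest)
      fix W :: "(complex^3 \<Rightarrow> complex) list" assume W: "W \<in> {W. length W = 2 - 1 \<and> (\<forall>w\<in>set W. linear_fun w)}"
      then obtain w where w: "W = [w]" by (auto simp: length_Suc_conv)
      then have "linear_fun w" using W by simp
      then show "3 \<le> T1 (ideal_gen ([f1, f2] @ W))" using T1_lower[OF f1 f2] w by simp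
    qed
  qed
next
  fix a b :: complex assume a: "a \<noteq> 0" and b: "b \<noteq> 0"
  note f1 = assms(1) and f2 = assms(2)
  show "\<exists>\<gamma>. comp_param ({z. f1 z = 0} \<inter> {z. z $ 3 + a * z $ 1 + b * z $ 2 = 0}) \<gamma> \<and>
             (\<forall>g\<in>ideal_gen [f1, f2]. vratio g \<gamma> \<ge> 4)"
  proof (intro exI conjI ballI)
    have f1z: "f1 (gab a b t) = 0" for t by (simp add: f1 algebra_simps power2_eq_square power3_eq_cube)
    have pl: "gab a b t $ 3 + a * gab a b t $ 1 + b * gab a b t $ 2 = 0" for t
      by (simp add: algebra_simps power2_eq_square)
    show "comp_param ({z. f1 z = 0} \<inter> {z. z $ 3 + a * z $ 1 + b * z $ 2 = 0}) (gab a b)"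
      unfolding comp_param_def
    proof (intro conjI exI[of _ "cmod a / (2 * cmod b)"])
      show "gab a b \<in> curves" by (rule gab_curve[OF a])
      show "cmod a / (2 * cmod b) > 0" using a b by simp
      show "\<forall>t\<in>ball 0 (cmod a / (2 * cmod b)). gab a b t \<in> {z. f1 z = 0} \<inter> {z. z $ 3 + a * z $ 1 + b * z $ 2 = 0}"
        using f1z pl by simp
      show "inj_on (gab a b) (ball 0 (cmod a / (2 * cmod b)))" by (rule gab_inj[OF a b])
    qed
    fix g assume "g \<in> ideal_gen [f1, f2]"
    then obtain e h0 h1 where e: "e > 0" "holo_n (ball 0 e) h0" "holo_n (ball 0 e) h1"
        "\<And>x. x \<in> ball 0 e \<Longrightarrow> g x = h0 x * f1 x + h1 x * f2 x"
      by (rule ideal2_dest[of g f1 f2]) (rule that; assumption)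
    show "vratio g (gab a b) \<ge> 4"
    proof (rule gab_vratio[OF a e(1) e(3)])
      fix t assume t: "gab a b t \<in> ball 0 e"
      show "g (gab a b t) = h1 (gab a b t) * (gab a b t $ 2)^2"
        using e(4)[OF t] f1z by (simp add: f2)
    qed
  qed
qed

end
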